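(* The compact Riemannian nilmanifold $M=(\Gamma\backslash N,g)$ defined below has completely integrable geodesic flow.
   Context: Let $\mathfrak v$ be a 5-dimensional real inner product space with orthonormal basis $X_i,X_j,Y_i,Y_j,Y_k$ and $\mathfrak z$ a 3-dimensional real inner product space with orthonormal basis $Z_i,Z_j,Z_k$. On $\mathfrak n=\mathfrak v\oplus\mathfrak z$ (orthogonal sum) define a two-step nilpotent Lie bracket $[\,,]$ with $\mathfrak z$ central and $[\mathfrak v,\mathfrak v]\subseteq\mathfrak z$, whose only nonzero brackets of basis vectors (up to antisymmetry) are $[X_i,Y_j]=Z_k$, $[X_i,Y_k]=-Z_j$, $[X_j,Y_i]=-Z_k$, $[X_j,Y_k]=Z_i$. Let $N$ be the simply connected Lie group with Lie algebra $\mathfrak n$, $g$ the left invariant metric given by the inner product on $\mathfrak n$, and $\Gamma=\exp(\mathcal G)$ with $\mathcal G=\mathrm{span}_{\mathbb Z}\{X_i,X_j,Y_i,Y_j,Y_k,\tfrac12 Z_i,\tfrac12 Z_j,\tfrac12 Z_k\}$ (a discrete cocompact subgroup); $M=(\Gamma\backslash N,g)$ carries the induced metric. Completely integrable geodesic flow (Liouville) on an $n$-manifold means: there exist $n$ pairwise Poisson-commuting smooth first integrals of the geodesic flow on $T^*M$ with $df_1\wedge\dots\wedge df_n\neq0$ on an open dense set. *)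

theory Defs
  imports "HOL-Analysis.Analysis"
begin

text \<open>Index type for the orthonormal basis X_i,X_j,Y_i,Y_j,Y_k,Z_i,Z_j,Z_k of n = v + z.\<close>
datatype idx = Xi | Xj | Yi | Yj | Yk | Zi | Zj | Zk

lemma UNIV_idx: "(UNIV :: idx set) = {Xi, Xj, Yi, Yj, Yk, Zi, Zj, Zk}"
  by (auto intro: idx.exhaust)

instance idx :: finite
  by standard (simp add: UNIV_idx)

type_synonym vec8 = "real ^ idx"

definition e :: "idx \<Rightarrow> vec8" where
  "e a = axis a 1"

fun basis_br :: "idx \<Rightarrow> idx \<Rightarrow> vec8" where
  "basis_br Xi Yj = e Zk"
| "basis_br Yj Xi = - e Zk"
| "basis_br Xi Yk = - e Zj"
| "basis_br Yk Xi = e Zj"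
| "basis_br Xj Yi = - e Zk"
| "basis_br Yi Xj = e Zk"
| "basis_br Xj Yk = e Zi"
| "basis_br Yk Xj = - e Zi"
| "basis_br _ _ = 0"

text \<open>Bilinear extension: the Lie bracket of n in the coordinates of the orthonormal basis.\<close>
definition br :: "vec8 \<Rightarrow> vec8 \<Rightarrow> vec8" where
  "br x y = (\<Sum>a\<in>UNIV. \<Sum>b\<in>UNIV. (x $ a * y $ b) *\<^sub>R basis_br a b)"

text \<open>Group law of N in exponential coordinates (BCH for two-step nilpotent).\<close>
definition nmult :: "vec8 \<Rightarrow> vec8 \<Rightarrow> vec8" where
  "nmult x y = x + y + (1/2) *\<^sub>R br x y"

text \<open>The lattice Gamma = exp(G) in exponential coordinates.\<close>
definition Gamma :: "vec8 set" where
  "Gamma = {g. (\<forall>a\<in>{Xi,Xj,Yi,Yj,Yk}. g $ a \<in> \<int>) \<and> (\<forall>a\<in>{Zi,Zj,Zk}. 2 * g $ a \<in> \<int>)}"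

text \<open>Left translation differential: d(L_g)_q v = v + 1/2 [g,v] (independent of q).
  The left-invariant vector field E_a at q is d(L_q)(e_a).\<close>
definition dL :: "vec8 \<Rightarrow> vec8 \<Rightarrow> vec8" where
  "dL g v = v + (1/2) *\<^sub>R br g v"

text \<open>T*N = N x (R^8)^* with canonical coordinates (q,p); covectors via dot product.\<close>
type_synonym phase = "vec8 \<times> vec8"

text \<open>Geodesic Hamiltonian of the left invariant metric: H = 1/2 sum_a p(E_a(q))^2.\<close>
definition Ham :: "phase \<Rightarrow> real" where
  "Ham z = (1/2) * (\<Sum>a\<in>UNIV. (snd z \<bullet> dL (fst z) (e a))^2)"

definition pull :: "vec8 \<Rightarrow> vec8 \<Rightarrow> vec8" where
  "pull g p = (\<chi> k. p \<bullet> dL g (e k))"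

text \<open>Functions on T*M = functions on T*N invariant under the cotangent-lifted Gamma action.\<close>
definition gamma_invariant :: "(phase \<Rightarrow> real) \<Rightarrow> bool" where
  "gamma_invariant f \<longleftrightarrow> (\<forall>g\<in>Gamma. \<forall>q p. f (nmult g q, p) = f (q, pull g p))"

fun Ck :: "nat \<Rightarrow> ('a::euclidean_space \<Rightarrow> real) \<Rightarrow> bool" where
  "Ck 0 f = continuous_on UNIV f"
| "Ck (Suc k) f = ((\<forall>x. f differentiable at x) \<and>
      (\<forall>b\<in>Basis. Ck k (\<lambda>x. frechet_derivative f (at x) b)))"

definition smooth_fn :: "('a::euclidean_space \<Rightarrow> real) \<Rightarrow> bool" where
  "smooth_fn f \<longleftrightarrow> (\<forall>k. Ck k f)"

definition dq :: "(phase \<Rightarrow> real) \<Rightarrow> idx \<Rightarrow> phase \<Rightarrow> real" where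
  "dq f k z = frechet_derivative f (at z) (e k, 0)"
definition dp :: "(phase \<Rightarrow> real) \<Rightarrow> idx \<Rightarrow> phase \<Rightarrow> real" where
  "dp f k z = frechet_derivative f (at z) (0, e k)"

definition poisson :: "(phase \<Rightarrow> real) \<Rightarrow> (phase \<Rightarrow> real) \<Rightarrow> phase \<Rightarrow> real" where
  "poisson f g z = (\<Sum>k\<in>UNIV. dq f k z * dp g k z - dp f k z * dq g k z)"

definition indep_diffs :: "nat \<Rightarrow> (nat \<Rightarrow> phase \<Rightarrow> real) \<Rightarrow> phase \<Rightarrow> bool" where
  "indep_diffs n F z \<longleftrightarrow>
     (\<forall>c::nat \<Rightarrow> real. (\<forall>v. (\<Sum>i<n. c i * frechet_derivative (F i) (at z) v) = 0)
        \<longrightarrow> (\<forall>i<n. c i = 0))"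

definition geodesic_flow_completely_integrable :: bool where
  "geodesic_flow_completely_integrable \<longleftrightarrow>
    (\<exists>F :: nat \<Rightarrow> phase \<Rightarrow> real.
       (\<forall>i<CARD(idx). smooth_fn (F i) \<and> gamma_invariant (F i) \<and> (\<forall>z. poisson (F i) Ham z = 0))
     \<and> (\<forall>i<CARD(idx). \<forall>j<CARD(idx). \<forall>z. poisson (F i) (F j) z = 0)
     \<and> (\<exists>U. open U \<and> closure U = UNIV \<and> (\<forall>z\<in>U. indep_diffs CARD(idx) F z)))"

end

theory Submission
  imports Defs
begin

lemma fd_mult:
  fixes f g :: "'a::real_normed_vector \<Rightarrow> real"
  assumes "f differentiable at x" "g differentiable at x"
  shows "frechet_derivative (\<lambda>x. f x * g x) (at x) h =
     f x * frechet_derivative g (at x) h + frechet_derivative f (at x) h * g x"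
proof -
  have "((\<lambda>x. f x * g x) has_derivative (\<lambda>h. f x * frechet_derivative g (at x) h + frechet_derivative f (at x) h * g x)) (at x)"
    by (rule has_derivative_mult) (use assms in \<open>auto simp: frechet_derivative_works\<close>)
  from frechet_derivative_at[OF this] show ?thesis by metis
qed

lemma fd_add:
  fixes f g :: "'a::real_normed_vector \<Rightarrow> real"
  assumes "f differentiable at x" "g differentiable at x"
  shows "frechet_derivative (\<lambda>x. f x + g x) (at x) h =
     frechet_derivative f (at x) h + frechet_derivative g (at x) h"
proof -
  have "((\<lambda>x. f x + g x) has_derivative (\<lambda>h. frechet_derivative f (at x) h + frechet_derivative g (at x) h)) (at x)"
    by (rule has_derivative_add) (use assms in \<open>auto simp: frechet_derivative_works\<close>)
  from frechet_derivative_at[OF this] show ?thesis by metis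
qed

lemma Ck_mono: "Ck (Suc k) f \<Longrightarrow> Ck k f"
proof (induction k arbitrary: f)
  case 0
  then show ?case by (auto intro!: differentiable_imp_continuous_within continuous_at_imp_continuous_on)
next
  case (Suc k)
  then show ?case by (metis Ck.simps(2))
qed

lemma Ck_const: "Ck k (\<lambda>x. c)"
  by (induction k arbitrary: c) auto

lemma Ck_add_mult:
  "Ck k f \<Longrightarrow> Ck k g \<Longrightarrow> Ck k (\<lambda>x. f x + g x) \<and> Ck k (\<lambda>x. f x * g x)"
proof (induction k arbitrary: f g)
  case 0
  then show ?case by (auto intro!: continuous_intros)
next
  case (Suc k)
  have df: "\<And>x. f differentiable at x" and dg: "\<And>x. g differentiable at x"
    using Suc.prems by auto
  have f: "Ck k f" and g: "Ck k g" using Suc.prems Ck_mono by blast+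
  have f': "\<And>b. b\<in>Basis \<Longrightarrow> Ck k (\<lambda>x. frechet_derivative f (at x) b)"
   and g': "\<And>b. b\<in>Basis \<Longrightarrow> Ck k (\<lambda>x. frechet_derivative g (at x) b)"
    using Suc.prems by auto
  show ?case
  proof
    show "Ck (Suc k) (\<lambda>x. f x + g x)"
    proof (simp, intro conjI ballI allI)
      fix x show "(\<lambda>x. f x + g x) differentiable at x" using df dg by simp
    next
      fix b :: 'a assume b: "b \<in> Basis"
      have e: "(\<lambda>x. frechet_derivative (\<lambda>x. f x + g x) (at x) b) =
        (\<lambda>x. frechet_derivative f (at x) b + frechet_derivative g (at x) b)"
        using df dg by (simp add: fd_add)
      show "Ck k (\<lambda>x. frechet_derivative (\<lambda>x. f x + g x) (at x) b)"
        unfolding e using Suc.IH f'[OF b] g'[OF b] by blast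
    qed
    show "Ck (Suc k) (\<lambda>x. f x * g x)"
    proof (simp, intro conjI ballI allI)
      fix x show "(\<lambda>x. f x * g x) differentiable at x" using df dg by simp
    next
      fix b :: 'a assume b: "b \<in> Basis"
      have e: "(\<lambda>x. frechet_derivative (\<lambda>x. f x * g x) (at x) b) =
        (\<lambda>x. f x * frechet_derivative g (at x) b + frechet_derivative f (at x) b * g x)"
        using df dg by (simp add: fd_mult)
      show "Ck k (\<lambda>x. frechet_derivative (\<lambda>x. f x * g x) (at x) b)"
        unfolding e using Suc.IH f g f'[OF b] g'[OF b] by blast
    qed
  qed
qed

lemma smooth_const: "smooth_fn (\<lambda>x. c)"
  by (simp add: smooth_fn_def Ck_const)
lemma smooth_add: "smooth_fn f \<Longrightarrow> smooth_fn g \<Longrightarrow> smooth_fn (\<lambda>x. f x + g x)"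
  by (simp add: smooth_fn_def Ck_add_mult)
lemma smooth_mult: "smooth_fn f \<Longrightarrow> smooth_fn g \<Longrightarrow> smooth_fn (\<lambda>x. f x * g x)"
  by (simp add: smooth_fn_def Ck_add_mult)

lemma Ck_linear: assumes "bounded_linear f" shows "Ck k f"
proof (cases k)
  case 0
  then show ?thesis
    using assms by (simp add: linear_continuous_on)
next
  case (Suc n)
  from assms have "\<And>x. frechet_derivative f (at x) = f"
    by (metis bounded_linear_imp_has_derivative frechet_derivative_at)
  with assms show ?thesis unfolding Suc
    by (auto simp: Ck_const bounded_linear_imp_differentiable)
qed

lemma smooth_linear: "bounded_linear f \<Longrightarrow> smooth_fn f"
  by (simp add: smooth_fn_def Ck_linear)

lemma smooth_diff_at: "smooth_fn f \<Longrightarrow> f differentiable at x"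
  unfolding smooth_fn_def by (metis Ck.simps(2))

lemma smooth_cont: "smooth_fn f \<Longrightarrow> continuous_on UNIV f"
  unfolding smooth_fn_def by (metis Ck.simps(1))


definition atom :: "nat \<Rightarrow> nat \<Rightarrow> bool \<Rightarrow> real \<times> real \<Rightarrow> real" where
  "atom n m b w = (if fst w = 0 then 0 else
     exp (- 1 / (fst w)^2) * (1 / fst w)^n * (snd w)^m *
       (if b then cos (2*pi * snd w / fst w) else sin (2*pi * snd w / fst w)))"

fun lv :: "(real \<times> nat \<times> nat \<times> bool) list \<Rightarrow> real \<times> real \<Rightarrow> real" where
  "lv [] w = 0"
| "lv ((a,n,m,b)#L) w = a * atom n m b w + lv L w"

fun dra :: "real \<times> nat \<times> nat \<times> bool \<Rightarrow> (real \<times> nat \<times> nat \<times> bool) list" where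
  "dra (a,n,m,True) = [(a * real m, n, m - 1, True), (- 2*pi*a, Suc n, m, False)]"
| "dra (a,n,m,False) = [(a * real m, n, m - 1, False), (2*pi*a, Suc n, m, True)]"

fun dta :: "real \<times> nat \<times> nat \<times> bool \<Rightarrow> (real \<times> nat \<times> nat \<times> bool) list" where
  "dta (a,n,m,True) = [(2*a, n+3, m, True), (- a * real n, Suc n, m, True), (2*pi*a, n+2, Suc m, False)]"
| "dta (a,n,m,False) = [(2*a, n+3, m, False), (- a * real n, Suc n, m, False), (-2*pi*a, n+2, Suc m, True)]"

lemma pow_pred_mult: "real n * (1/t)^(n - Suc 0) = real n * (1/(t::real))^n * t" if "t \<noteq> 0"
  using that by (cases n) auto

lemma atom_deriv_nz:
  assumes t: "fst w \<noteq> 0"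
  shows "(atom n m b has_derivative
     (\<lambda>h. fst h * lv (dta (1,n,m,b)) w + snd h * lv (dra (1,n,m,b)) w)) (at w)"
proof -
  obtain t r where w: "w = (t,r)" by (cases w)
  have t0: "t \<noteq> 0" using t w by simp
  define U where "U = inverse t"
  have tU: "t * U = 1" using t0 by (simp add: U_def)
  define f0 where "f0 = (\<lambda>w::real\<times>real. exp (- 1 / (fst w)^2) * (1 / fst w)^n * (snd w)^m *
       (if b then cos (2*pi * snd w / fst w) else sin (2*pi * snd w / fst w)))"
  have eq: "\<And>w'. w' \<in> {w. fst w \<noteq> 0} \<Longrightarrow> f0 w' = atom n m b w'"
    by (simp add: f0_def atom_def)
  have "(f0 has_derivative
     (\<lambda>h. fst h * lv (dta (1,n,m,b)) w + snd h * lv (dra (1,n,m,b)) w)) (at w)"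
  proof (cases b)
    case True
    have e: "f0 = (\<lambda>w::real\<times>real. exp (- 1 / (fst w)^2) * (1 / fst w)^n * (snd w)^m *
       cos (2*pi * snd w / fst w))" using True by (simp add: f0_def)
    show ?thesis unfolding e w
      apply (auto intro!: derivative_eq_intros ext)
      using t0 apply (simp_all add: True)
      apply (cases n)
      apply (simp_all add: atom_def divide_inverse power_add power_inverse[symmetric] inverse_mult_distrib del: power_inverse)
      apply (simp_all only: U_def[symmetric])
      subgoal for a b
      proof -
        define Rm where "Rm = r^m"
        define R1 where "R1 = r^(m - Suc 0)"
        show ?thesis unfolding Rm_def[symmetric] R1_def[symmetric] using tU by algebra
      qed
      subgoal for a b k
      proof -
        define Rm where "Rm = r^m"
        define R1 where "R1 = r^(m - Suc 0)"
        define V where "V = U^k"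
        show ?thesis unfolding Rm_def[symmetric] R1_def[symmetric] V_def[symmetric] using tU by algebra
      qed
      done
  next
    case False
    have e: "f0 = (\<lambda>w::real\<times>real. exp (- 1 / (fst w)^2) * (1 / fst w)^n * (snd w)^m *
       sin (2*pi * snd w / fst w))" using False by (simp add: f0_def)
    show ?thesis unfolding e w
      apply (auto intro!: derivative_eq_intros ext)
      using t0 apply (simp_all add: False)
      apply (cases n)
      apply (simp_all add: atom_def divide_inverse power_add power_inverse[symmetric] inverse_mult_distrib del: power_inverse)
      apply (simp_all only: U_def[symmetric])
      subgoal for a b
      proof -
        define Rm where "Rm = r^m"
        define R1 where "R1 = r^(m - Suc 0)"
        show ?thesis unfolding Rm_def[symmetric] R1_def[symmetric] using tU by algebra
      qed
      subgoal for a b k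
      proof -
        define Rm where "Rm = r^m"
        define R1 where "R1 = r^(m - Suc 0)"
        define V where "V = U^k"
        show ?thesis unfolding Rm_def[symmetric] R1_def[symmetric] V_def[symmetric] using tU by algebra
      qed
      done
  qed
  then show ?thesis
  proof (rule has_derivative_transform_within_open[OF _ _ _ eq])
    show "open {w::real\<times>real. fst w \<noteq> 0}"
      by (rule open_Collect_neq) (auto intro: continuous_intros)
  qed (use t in auto)
qed

lemma exp_flat:
  assumes "t \<noteq> 0" "K > 0"
  shows "exp (- 1 / t^2) \<le> real K ^ K * (t^2)^K"
proof -
  have y: "0 < 1 / t^2" using assms by simp
  have "(1 / t^2 / real K) ^ K \<le> (1 + (1 / t^2) / real K) ^ K"
    by (rule power_mono) (use y assms in auto)
  also have "\<dots> \<le> exp (1 / t^2)"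
    by (rule exp_ge_one_plus_x_over_n_power_n) (use y assms in \<open>auto intro: order.trans[of _ 0]\<close>)
  finally have h: "1 / (real K ^ K * (t^2)^K) \<le> exp (1 / t^2)"
    by (simp add: power_divide power_mult_distrib mult.commute)
  have pos: "0 < real K ^ K * (t^2)^K" using assms by simp
  have "exp (- 1 / t^2) = 1 / exp (1 / t^2)" by (simp add: exp_minus field_simps)
  also have "\<dots> \<le> 1 / (1 / (real K ^ K * (t^2)^K))"
    by (rule divide_left_mono[OF h]) (use pos in auto)
  also have "\<dots> = real K ^ K * (t^2)^K" by simp
  finally show ?thesis .
qed

lemma atom_bound: "\<bar>atom n m b (t,r)\<bar> \<le> exp (- 1 / t^2) * \<bar>1/t\<bar>^n * \<bar>r\<bar>^m"
proof -
  have "\<bar>if b then cos (2*pi * r / t) else sin (2*pi * r / t)\<bar> \<le> 1" by auto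
  then show ?thesis
    unfolding atom_def
    by (auto simp: abs_mult power_abs intro!: mult_left_le)
qed

lemma atom_deriv_zero:
  assumes t: "fst w = 0"
  shows "(atom n m b has_derivative (\<lambda>h. 0)) (at w)"
proof -
  obtain r0 where w: "w = (0, r0)" using t by (cases w) auto
  define B where "B = (\<bar>r0\<bar> + 1)^m"
  define K where "K = Suc n"
  define C where "C = real K ^ K * B"
  have Bpos: "B > 0" unfolding B_def by simp
  have Cpos: "C > 0" unfolding C_def K_def using Bpos by simp
  show ?thesis unfolding has_derivative_at'
  proof (intro conjI allI impI)
    show "bounded_linear (\<lambda>h::real\<times>real. 0::real)" by simp
  next
    fix e :: real assume e: "e > 0"
    define d where "d = min 1 (e / C)"
    have d: "d > 0" using e Cpos by (simp add: d_def)
    show "\<exists>d>0. \<forall>x'. 0 < norm (x' - w) \<and> norm (x' - w) < d \<longrightarrow>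
        norm (atom n m b x' - atom n m b w - 0) / norm (x' - w) < e"
    proof (intro exI[of _ d] conjI allI impI d)
      fix x' :: "real \<times> real"
      assume x': "0 < norm (x' - w) \<and> norm (x' - w) < d"
      obtain t r where xt: "x' = (t, r)" by (cases x')
      have aw: "atom n m b w = 0" using w by (simp add: atom_def)
      have nt: "\<bar>t\<bar> \<le> norm (x' - w)" using norm_fst_le[of t "r - r0"] xt w by simp
      have nr: "\<bar>r - r0\<bar> \<le> norm (x' - w)" using norm_snd_le[of "r - r0" t] xt w by simp
      show "norm (atom n m b x' - atom n m b w - 0) / norm (x' - w) < e"
      proof (cases "t = 0")
        case True
        then show ?thesis using xt aw e by (simp add: atom_def)
      next
        case False
        have t1: "\<bar>t\<bar> < 1" using nt x' d_def by simp
        have te: "\<bar>t\<bar> < e / C" using nt x' d_def by simp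
        have rB: "\<bar>r\<bar>^m \<le> B" unfolding B_def
          by (rule power_mono) (use nr x' d_def in auto)
        have fl: "exp (- 1 / t^2) \<le> real K ^ K * (t^2)^K"
          by (rule exp_flat) (use False K_def in auto)
        have "\<bar>atom n m b (t,r)\<bar> \<le> exp (- 1 / t^2) * \<bar>1/t\<bar>^n * \<bar>r\<bar>^m" by (rule atom_bound)
        also have "\<dots> \<le> (real K ^ K * (t^2)^K) * \<bar>1/t\<bar>^n * B"
          by (intro mult_mono fl rB) auto
        also have "\<dots> = real K ^ K * B * (\<bar>t\<bar>^(n+2))"
        proof -
          have "(t^2)^K * \<bar>1/t\<bar>^n = \<bar>t\<bar>^(n+2)"
          proof -
            have "(t^2)^K = (\<bar>t\<bar>^2)^K" by simp
            also have "\<dots> = \<bar>t\<bar>^(2*n+2)" unfolding K_def power_mult[symmetric]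
              by (simp add: mult_Suc_right)
            finally have "(t^2)^K = \<bar>t\<bar>^(2*n+2)" .
            moreover have "\<bar>t\<bar>^(2*n+2) * \<bar>1/t\<bar>^n = \<bar>t\<bar>^(n+2) * \<bar>t\<bar>^n * \<bar>1/t\<bar>^n"
            proof -
              have "\<bar>t\<bar>^(2*n+2) = \<bar>t\<bar>^((n+2)+n)" by (rule arg_cong[of _ _ "\<lambda>k. \<bar>t\<bar>^k"]) simp
              then show ?thesis by (simp only: power_add)
            qed
            moreover have "\<bar>t\<bar>^n * \<bar>1/t\<bar>^n = 1" using False
              by (simp add: power_mult_distrib[symmetric] abs_mult[symmetric])
            ultimately show ?thesis by (metis mult.assoc mult_1_right)
          qed
          then show ?thesis by (simp add: algebra_simps)
        qed
        also have "\<dots> \<le> C * (\<bar>t\<bar> * \<bar>t\<bar>)"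
        proof -
          have "\<bar>t\<bar>^n \<le> 1" using t1 by (simp add: power_le_one)
          then have "\<bar>t\<bar>^n * (\<bar>t\<bar> * \<bar>t\<bar>) \<le> \<bar>t\<bar> * \<bar>t\<bar>" by (simp add: mult_left_le_one_le)
          then have "\<bar>t\<bar>^(n+2) \<le> \<bar>t\<bar> * \<bar>t\<bar>" by (simp add: algebra_simps power2_eq_square)
          then show ?thesis unfolding C_def using Bpos by (simp add: mult_left_mono)
        qed
        finally have a1: "\<bar>atom n m b (t,r)\<bar> \<le> C * (\<bar>t\<bar> * \<bar>t\<bar>)" .
        have "norm (atom n m b x' - atom n m b w - 0) / norm (x' - w) \<le> C * (\<bar>t\<bar> * \<bar>t\<bar>) / norm (x' - w)"
          using a1 aw xt x' by (simp add: divide_right_mono)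
        also have "\<dots> \<le> C * (\<bar>t\<bar> * \<bar>t\<bar>) / \<bar>t\<bar>"
          by (rule divide_left_mono) (use nt Cpos False x' in auto)
        also have "\<dots> = C * \<bar>t\<bar>" using False by (simp add: abs_mult[symmetric] field_simps)
        also have "\<dots> < C * (e / C)" using te Cpos by (simp only: mult_strict_left_mono)
        also have "\<dots> = e" using Cpos by simp
        finally show ?thesis .
      qed
    qed
  qed
qed

fun dtl :: "(real \<times> nat \<times> nat \<times> bool) list \<Rightarrow> (real \<times> nat \<times> nat \<times> bool) list" where
  "dtl [] = []" | "dtl (x#L) = dta x @ dtl L"
fun drl :: "(real \<times> nat \<times> nat \<times> bool) list \<Rightarrow> (real \<times> nat \<times> nat \<times> bool) list" where
  "drl [] = []" | "drl (x#L) = dra x @ drl L"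

lemma lv_Cons: "lv (x#L) w = (case x of (a,n,m,b) \<Rightarrow> a * atom n m b w) + lv L w"
  by (cases x) auto

lemma lv_append: "lv (A @ B) w = lv A w + lv B w"
  by (induction A) (auto simp: lv_Cons)

lemma lv_zero: "fst w = 0 \<Longrightarrow> lv L w = 0"
  by (induction L) (auto simp: lv_Cons atom_def split: prod.split)

lemma lv_dta_scale: "lv (dta (a,n,m,b)) w = a * lv (dta (1,n,m,b)) w"
  by (cases b) (auto simp: algebra_simps)
lemma lv_dra_scale: "lv (dra (a,n,m,b)) w = a * lv (dra (1,n,m,b)) w"
  by (cases b) (auto simp: algebra_simps)

lemma atom_deriv:
  "(atom n m b has_derivative
     (\<lambda>h. fst h * lv (dta (1,n,m,b)) w + snd h * lv (dra (1,n,m,b)) w)) (at w)"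
proof (cases "fst w = 0")
  case True
  have "(atom n m b has_derivative (\<lambda>h. 0)) (at w)" using atom_deriv_zero[OF True] .
  moreover have "(\<lambda>h. 0) = (\<lambda>h::real\<times>real. fst h * lv (dta (1,n,m,b)) w + snd h * lv (dra (1,n,m,b)) w)"
    using lv_zero[OF True] by simp
  ultimately show ?thesis by simp
next
  case False
  then show ?thesis by (rule atom_deriv_nz)
qed

lemma lv_deriv:
  "(lv L has_derivative (\<lambda>h. fst h * lv (dtl L) w + snd h * lv (drl L) w)) (at w)"
proof (induction L)
  case Nil
  then show ?case by simp
next
  case (Cons x L)
  obtain a n m b where x: "x = (a,n,m,b)" by (cases x) auto
  have e: "lv (x#L) = (\<lambda>w. a * atom n m b w + lv L w)" using x by auto
  show ?case unfolding e
    apply (rule has_derivative_eq_rhs)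
     apply (rule has_derivative_add[OF has_derivative_mult_right[OF atom_deriv] Cons.IH])
    apply (simp add: x lv_append)
    apply (simp only: lv_dta_scale[of a n m b w] lv_dra_scale[of a n m b w])
    apply (simp add: algebra_simps)
    done
qed

lemma lv_differentiable: "lv L differentiable at w"
  using lv_deriv unfolding differentiable_def by blast

lemma Basis_rr: "(Basis :: (real \<times> real) set) = {(1,0), (0,1)}"
  by (auto simp: Basis_prod_def)

lemma fd_lv_1: "frechet_derivative (lv L) (at w) (1,0) = lv (dtl L) w"
  by (simp flip: frechet_derivative_at[OF lv_deriv[of L w]])
lemma fd_lv_2: "frechet_derivative (lv L) (at w) (0,1) = lv (drl L) w"
  by (simp flip: frechet_derivative_at[OF lv_deriv[of L w]])

lemma Ck_lv: "Ck k (lv L)"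
proof (induction k arbitrary: L)
  case 0
  then show ?case
    by (auto intro!: differentiable_imp_continuous_within continuous_at_imp_continuous_on lv_differentiable)
next
  case (Suc k)
  then show ?case by (auto simp: Basis_rr fd_lv_1 fd_lv_2 lv_differentiable)
qed

lemma Ck_lv_comp:
  fixes g1 g2 :: "'a::euclidean_space \<Rightarrow> real"
  assumes "smooth_fn g1" "smooth_fn g2"
  shows "Ck k (\<lambda>z. lv L (g1 z, g2 z))"
  using assms
proof (induction k arbitrary: L)
  case 0
  have "continuous_on UNIV g1" "continuous_on UNIV g2" using 0 by (auto simp: smooth_cont)
  moreover have "continuous_on UNIV (lv L)" using Ck_lv[of 0 L] by simp
  ultimately show ?case
    by (auto intro!: continuous_on_compose2[of UNIV "lv L"] continuous_intros)
next
  case (Suc k)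
  have d1: "\<And>z. (g1 has_derivative frechet_derivative g1 (at z)) (at z)"
    using Suc.prems smooth_diff_at frechet_derivative_works by blast
  have d2: "\<And>z. (g2 has_derivative frechet_derivative g2 (at z)) (at z)"
    using Suc.prems smooth_diff_at frechet_derivative_works by blast
  have D: "((\<lambda>z. lv L (g1 z, g2 z)) has_derivative
      (\<lambda>h. frechet_derivative g1 (at z) h * lv (dtl L) (g1 z, g2 z) +
           frechet_derivative g2 (at z) h * lv (drl L) (g1 z, g2 z))) (at z)" for z
  proof -
    have "((\<lambda>z. lv L (g1 z, g2 z)) has_derivative
       (\<lambda>h. fst h * lv (dtl L) (g1 z, g2 z) + snd h * lv (drl L) (g1 z, g2 z)) \<circ>
       (\<lambda>h. (frechet_derivative g1 (at z) h, frechet_derivative g2 (at z) h))) (at z)"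
      using diff_chain_at[OF has_derivative_Pair[OF d1 d2] lv_deriv] by (simp add: o_def)
    then show ?thesis by (simp add: o_def)
  qed
  have fd: "frechet_derivative (\<lambda>z. lv L (g1 z, g2 z)) (at z) b =
      frechet_derivative g1 (at z) b * lv (dtl L) (g1 z, g2 z) +
      frechet_derivative g2 (at z) b * lv (drl L) (g1 z, g2 z)" for z b
    using frechet_derivative_at[OF D[of z]] by metis
  have c1: "Ck k (\<lambda>z. frechet_derivative g1 (at z) b)" if "b \<in> Basis" for b
    using Suc.prems that unfolding smooth_fn_def by (metis Ck.simps(2))
  have c2: "Ck k (\<lambda>z. frechet_derivative g2 (at z) b)" if "b \<in> Basis" for b
    using Suc.prems that unfolding smooth_fn_def by (metis Ck.simps(2))
  show ?case
  proof (simp only: Ck.simps, intro conjI allI ballI)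
    fix z show "(\<lambda>z. lv L (g1 z, g2 z)) differentiable at z"
      using D unfolding differentiable_def by blast
  next
    fix b :: 'a assume b: "b \<in> Basis"
    show "Ck k (\<lambda>z. frechet_derivative (\<lambda>z. lv L (g1 z, g2 z)) (at z) b)"
      unfolding fd using Ck_add_mult c1[OF b] c2[OF b] Suc.IH[OF Suc.prems] by blast
  qed
qed

lemma smooth_lv_comp:
  "smooth_fn g1 \<Longrightarrow> smooth_fn g2 \<Longrightarrow> smooth_fn (\<lambda>z. lv L (g1 z, g2 z))"
  by (simp add: smooth_fn_def Ck_lv_comp)


lemma e_comp: "e a $ k = (if k = a then 1 else 0)"
  by (simp add: e_def axis_def)

lemma sum_idx: "(\<Sum>a\<in>UNIV. f a) = f Xi + f Xj + f Yi + f Yj + f Yk + f Zi + f Zj + f Zk"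
  by (simp add: UNIV_idx add.assoc)

lemma br_comp: "br x y $ k = (case k of
    Zi \<Rightarrow> x$Xj * y$Yk - x$Yk * y$Xj
  | Zj \<Rightarrow> x$Yk * y$Xi - x$Xi * y$Yk
  | Zk \<Rightarrow> x$Xi * y$Yj - x$Yj * y$Xi - x$Xj * y$Yi + x$Yi * y$Xj
  | _ \<Rightarrow> 0)"
  by (cases k) (simp_all add: br_def sum_idx e_comp algebra_simps)

definition qc :: "idx \<Rightarrow> phase \<Rightarrow> real" where "qc i z = fst z $ i"
definition pc :: "idx \<Rightarrow> phase \<Rightarrow> real" where "pc i z = snd z $ i"

definition P :: "idx \<Rightarrow> phase \<Rightarrow> real" where
  "P a z = snd z \<bullet> dL (fst z) (e a)"

lemma inner_idx: "(x::vec8) \<bullet> y = x$Xi * y$Xi + x$Xj * y$Xj + x$Yi * y$Yi + x$Yj * y$Yj + x$Yk * y$Yk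
   + x$Zi * y$Zi + x$Zj * y$Zj + x$Zk * y$Zk"
  by (simp add: inner_vec_def sum_idx)

lemma dL_comp: "dL g v $ k = v $ k + 1/2 * br g v $ k"
  by (simp add: dL_def)

lemma P_Xi: "P Xi = (\<lambda>z. pc Xi z - 1/2 * qc Yj z * pc Zk z + 1/2 * qc Yk z * pc Zj z)"
  by (rule ext) (simp add: P_def qc_def pc_def inner_idx dL_comp br_comp e_comp algebra_simps)
lemma P_Xj: "P Xj = (\<lambda>z. pc Xj z + 1/2 * qc Yi z * pc Zk z - 1/2 * qc Yk z * pc Zi z)"
  by (rule ext) (simp add: P_def qc_def pc_def inner_idx dL_comp br_comp e_comp algebra_simps)
lemma P_Yi: "P Yi = (\<lambda>z. pc Yi z - 1/2 * qc Xj z * pc Zk z)"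
  by (rule ext) (simp add: P_def qc_def pc_def inner_idx dL_comp br_comp e_comp algebra_simps)
lemma P_Yj: "P Yj = (\<lambda>z. pc Yj z + 1/2 * qc Xi z * pc Zk z)"
  by (rule ext) (simp add: P_def qc_def pc_def inner_idx dL_comp br_comp e_comp algebra_simps)
lemma P_Yk: "P Yk = (\<lambda>z. pc Yk z - 1/2 * qc Xi z * pc Zj z + 1/2 * qc Xj z * pc Zi z)"
  by (rule ext) (simp add: P_def qc_def pc_def inner_idx dL_comp br_comp e_comp algebra_simps)
lemma P_Zi: "P Zi = pc Zi"
  by (rule ext) (simp add: P_def qc_def pc_def inner_idx dL_comp br_comp e_comp algebra_simps)
lemma P_Zj: "P Zj = pc Zj"
  by (rule ext) (simp add: P_def qc_def pc_def inner_idx dL_comp br_comp e_comp algebra_simps)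
lemma P_Zk: "P Zk = pc Zk"
  by (rule ext) (simp add: P_def qc_def pc_def inner_idx dL_comp br_comp e_comp algebra_simps)

lemmas P_expl = P_Xi P_Xj P_Yi P_Yj P_Yk P_Zi P_Zj P_Zk

definition R1 :: "phase \<Rightarrow> real" where "R1 z = pc Yi z + 1/2 * qc Xj z * pc Zk z"
definition R2 :: "phase \<Rightarrow> real" where "R2 z = pc Yj z - 1/2 * qc Xi z * pc Zk z"

lemma Ham_P: "Ham = (\<lambda>z. 1/2 * (P Xi z * P Xi z + P Xj z * P Xj z + P Yi z * P Yi z + P Yj z * P Yj z
   + P Yk z * P Yk z + P Zi z * P Zi z + P Zj z * P Zj z + P Zk z * P Zk z))"
  by (rule ext) (simp add: Ham_def P_def sum_idx power2_eq_square add.assoc)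

lemma smooth_qc[simp]: "smooth_fn (qc i)"
  unfolding qc_def
  by (rule smooth_linear) (rule bounded_linear_compose[OF bounded_linear_vec_nth bounded_linear_fst])
lemma smooth_pc[simp]: "smooth_fn (pc i)"
  unfolding pc_def
  by (rule smooth_linear) (rule bounded_linear_compose[OF bounded_linear_vec_nth bounded_linear_snd])

lemma smooth_diff: "smooth_fn f \<Longrightarrow> smooth_fn g \<Longrightarrow> smooth_fn (\<lambda>x. f x - g x)"
proof -
  assume "smooth_fn f" "smooth_fn g"
  then have "smooth_fn (\<lambda>x. f x + (-1) * g x)" by (intro smooth_add smooth_mult smooth_const)
  then show ?thesis by simp
qed

lemma smooth_divc: "smooth_fn f \<Longrightarrow> smooth_fn (\<lambda>x. f x / c)"
proof -
  assume "smooth_fn f"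
  then have "smooth_fn (\<lambda>x. f x * (1/c))" by (intro smooth_mult smooth_const)
  then show ?thesis by simp
qed

lemmas smooth_rules[simp] = smooth_const smooth_add smooth_mult smooth_diff smooth_lv_comp smooth_divc

lemma smooth_P[simp]: "smooth_fn (P a)"
  by (cases a) (simp_all add: P_expl)
lemma smooth_R1[simp]: "smooth_fn R1" unfolding R1_def by simp
lemma smooth_R2[simp]: "smooth_fn R2" unfolding R2_def by simp

lemma fd_diff:
  fixes f g :: "'a::real_normed_vector \<Rightarrow> real"
  assumes "f differentiable at x" "g differentiable at x"
  shows "frechet_derivative (\<lambda>x. f x - g x) (at x) h =
     frechet_derivative f (at x) h - frechet_derivative g (at x) h"
proof -
  have "((\<lambda>x. f x - g x) has_derivative (\<lambda>h. frechet_derivative f (at x) h - frechet_derivative g (at x) h)) (at x)"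
    by (rule has_derivative_diff) (use assms in \<open>auto simp: frechet_derivative_works\<close>)
  from frechet_derivative_at[OF this] show ?thesis by metis
qed

lemma fd_lv_comp:
  fixes g1 g2 :: "'a::euclidean_space \<Rightarrow> real"
  assumes "smooth_fn g1" "smooth_fn g2"
  shows "frechet_derivative (\<lambda>z. lv L (g1 z, g2 z)) (at z) h =
      frechet_derivative g1 (at z) h * lv (dtl L) (g1 z, g2 z) +
      frechet_derivative g2 (at z) h * lv (drl L) (g1 z, g2 z)"
proof -
  have d1: "(g1 has_derivative frechet_derivative g1 (at z)) (at z)"
    using assms smooth_diff_at frechet_derivative_works by blast
  have d2: "(g2 has_derivative frechet_derivative g2 (at z)) (at z)"
    using assms smooth_diff_at frechet_derivative_works by blast
  have "((\<lambda>z. lv L (g1 z, g2 z)) has_derivative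
       (\<lambda>h. fst h * lv (dtl L) (g1 z, g2 z) + snd h * lv (drl L) (g1 z, g2 z)) \<circ>
       (\<lambda>h. (frechet_derivative g1 (at z) h, frechet_derivative g2 (at z) h))) (at z)"
    using diff_chain_at[OF has_derivative_Pair[OF d1 d2] lv_deriv] by (simp add: o_def)
  note e2 = frechet_derivative_at[OF this, symmetric]
  show ?thesis by (simp add: e2 o_def)
qed

lemma dq_add: "smooth_fn f \<Longrightarrow> smooth_fn g \<Longrightarrow> dq (\<lambda>z. f z + g z) k z = dq f k z + dq g k z"
  by (simp add: dq_def fd_add smooth_diff_at)
lemma dp_add: "smooth_fn f \<Longrightarrow> smooth_fn g \<Longrightarrow> dp (\<lambda>z. f z + g z) k z = dp f k z + dp g k z"
  by (simp add: dp_def fd_add smooth_diff_at)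
lemma dq_diff: "smooth_fn f \<Longrightarrow> smooth_fn g \<Longrightarrow> dq (\<lambda>z. f z - g z) k z = dq f k z - dq g k z"
  by (simp add: dq_def fd_diff smooth_diff_at)
lemma dp_diff: "smooth_fn f \<Longrightarrow> smooth_fn g \<Longrightarrow> dp (\<lambda>z. f z - g z) k z = dp f k z - dp g k z"
  by (simp add: dp_def fd_diff smooth_diff_at)
lemma dq_mult: "smooth_fn f \<Longrightarrow> smooth_fn g \<Longrightarrow> dq (\<lambda>z. f z * g z) k z = f z * dq g k z + dq f k z * g z"
  by (simp add: dq_def fd_mult smooth_diff_at)
lemma dp_mult: "smooth_fn f \<Longrightarrow> smooth_fn g \<Longrightarrow> dp (\<lambda>z. f z * g z) k z = f z * dp g k z + dp f k z * g z"
  by (simp add: dp_def fd_mult smooth_diff_at)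
lemma dq_divc: "smooth_fn f \<Longrightarrow> dq (\<lambda>z. f z / c) k z = dq f k z / c"
  using dq_mult[of f "\<lambda>z. 1/c" k z] by (simp add: dq_def)
lemma dp_divc: "smooth_fn f \<Longrightarrow> dp (\<lambda>z. f z / c) k z = dp f k z / c"
  using dp_mult[of f "\<lambda>z. 1/c" k z] by (simp add: dp_def)
lemma dq_const: "dq (\<lambda>z. c) k z = 0" by (simp add: dq_def)
lemma dp_const: "dp (\<lambda>z. c) k z = 0" by (simp add: dp_def)
lemma dq_lv: "smooth_fn g1 \<Longrightarrow> smooth_fn g2 \<Longrightarrow> dq (\<lambda>z. lv L (g1 z, g2 z)) k z =
   dq g1 k z * lv (dtl L) (g1 z, g2 z) + dq g2 k z * lv (drl L) (g1 z, g2 z)"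
  by (simp add: dq_def fd_lv_comp)
lemma dp_lv: "smooth_fn g1 \<Longrightarrow> smooth_fn g2 \<Longrightarrow> dp (\<lambda>z. lv L (g1 z, g2 z)) k z =
   dp g1 k z * lv (dtl L) (g1 z, g2 z) + dp g2 k z * lv (drl L) (g1 z, g2 z)"
  by (simp add: dp_def fd_lv_comp)

lemma fd_lin: "bounded_linear f \<Longrightarrow> frechet_derivative f (at z) = f"
  by (metis bounded_linear_imp_has_derivative frechet_derivative_at)

lemma dq_qc: "dq (qc i) k z = (if i = k then 1 else 0)"
proof -
  have "bounded_linear (qc i)" unfolding qc_def
    by (rule bounded_linear_compose[OF bounded_linear_vec_nth bounded_linear_fst])
  then show ?thesis by (simp add: dq_def fd_lin qc_def e_comp)
qed
lemma dp_qc: "dp (qc i) k z = 0"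
proof -
  have "bounded_linear (qc i)" unfolding qc_def
    by (rule bounded_linear_compose[OF bounded_linear_vec_nth bounded_linear_fst])
  then show ?thesis by (simp add: dp_def fd_lin qc_def)
qed
lemma dq_pc: "dq (pc i) k z = 0"
proof -
  have "bounded_linear (pc i)" unfolding pc_def
    by (rule bounded_linear_compose[OF bounded_linear_vec_nth bounded_linear_snd])
  then show ?thesis by (simp add: dq_def fd_lin pc_def)
qed
lemma dp_pc: "dp (pc i) k z = (if i = k then 1 else 0)"
proof -
  have "bounded_linear (pc i)" unfolding pc_def
    by (rule bounded_linear_compose[OF bounded_linear_vec_nth bounded_linear_snd])
  then show ?thesis by (simp add: dp_def fd_lin pc_def e_comp)
qed

lemmas d_rules = dq_divc dp_divc dq_add dp_add dq_diff dp_diff dq_mult dp_mult dq_const dp_const dq_lv dp_lv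
  dq_qc dp_qc dq_pc dp_pc

lemma pois_anti: "poisson f g z = - poisson g f z"
  by (simp add: poisson_def sum_negf[symmetric] algebra_simps)

lemma pois_add_l: "smooth_fn f \<Longrightarrow> smooth_fn g \<Longrightarrow>
   poisson (\<lambda>z. f z + g z) h z = poisson f h z + poisson g h z"
  by (simp add: poisson_def dq_add dp_add sum.distrib[symmetric] algebra_simps)
lemma pois_diff_l: "smooth_fn f \<Longrightarrow> smooth_fn g \<Longrightarrow>
   poisson (\<lambda>z. f z - g z) h z = poisson f h z - poisson g h z"
  by (simp add: poisson_def dq_diff dp_diff sum_subtractf[symmetric] algebra_simps)
lemma pois_mult_l: "smooth_fn f \<Longrightarrow> smooth_fn g \<Longrightarrow>
   poisson (\<lambda>z. f z * g z) h z = f z * poisson g h z + g z * poisson f h z"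
  by (simp add: poisson_def dq_mult dp_mult sum.distrib[symmetric] sum_distrib_left algebra_simps)
lemma pois_divc_l: "smooth_fn f \<Longrightarrow> poisson (\<lambda>z. f z / c) h z = poisson f h z / c"
  by (simp add: poisson_def dq_divc dp_divc sum_divide_distrib algebra_simps diff_divide_distrib)
lemma pois_divc_r: "smooth_fn f \<Longrightarrow> poisson h (\<lambda>z. f z / c) z = poisson h f z / c"
  by (subst pois_anti) (simp add: pois_divc_l pois_anti[of f h])
lemma pois_const_l: "poisson (\<lambda>z. c) h z = 0"
  by (simp add: poisson_def dq_const dp_const)
lemma pois_lv_l: "smooth_fn g1 \<Longrightarrow> smooth_fn g2 \<Longrightarrow>
   poisson (\<lambda>z. lv L (g1 z, g2 z)) h z =
     lv (dtl L) (g1 z, g2 z) * poisson g1 h z + lv (drl L) (g1 z, g2 z) * poisson g2 h z"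
  by (simp add: poisson_def dq_lv dp_lv sum.distrib[symmetric] sum_distrib_left algebra_simps)

lemma pois_add_r: "smooth_fn f \<Longrightarrow> smooth_fn g \<Longrightarrow>
   poisson h (\<lambda>z. f z + g z) z = poisson h f z + poisson h g z"
  by (subst pois_anti) (simp add: pois_add_l pois_anti[of f h] pois_anti[of g h])
lemma pois_diff_r: "smooth_fn f \<Longrightarrow> smooth_fn g \<Longrightarrow>
   poisson h (\<lambda>z. f z - g z) z = poisson h f z - poisson h g z"
  by (subst pois_anti) (simp add: pois_diff_l pois_anti[of f h] pois_anti[of g h])
lemma pois_mult_r: "smooth_fn f \<Longrightarrow> smooth_fn g \<Longrightarrow>
   poisson h (\<lambda>z. f z * g z) z = f z * poisson h g z + g z * poisson h f z"
  by (subst pois_anti) (simp add: pois_mult_l pois_anti[of f h] pois_anti[of g h])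
lemma pois_const_r: "poisson h (\<lambda>z. c) z = 0"
  by (subst pois_anti) (simp add: pois_const_l)
lemma pois_lv_r: "smooth_fn g1 \<Longrightarrow> smooth_fn g2 \<Longrightarrow>
   poisson h (\<lambda>z. lv L (g1 z, g2 z)) z =
     lv (dtl L) (g1 z, g2 z) * poisson h g1 z + lv (drl L) (g1 z, g2 z) * poisson h g2 z"
  by (subst pois_anti) (simp add: pois_lv_l pois_anti[of g1 h] pois_anti[of g2 h])

lemma pois_qq: "poisson (qc i) (qc j) z = 0"
  by (simp add: poisson_def dq_qc dp_qc)
lemma pois_pp: "poisson (pc i) (pc j) z = 0"
  by (simp add: poisson_def dq_pc dp_pc)
lemma pois_qp: "poisson (qc i) (pc j) z = (if i = j then 1 else 0)"
  by (cases i; cases j) (simp_all add: poisson_def dq_qc dp_qc dq_pc dp_pc sum_idx)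
lemma pois_pq: "poisson (pc i) (qc j) z = (if i = j then -1 else 0)"
  by (cases i; cases j) (simp_all add: poisson_def dq_qc dp_qc dq_pc dp_pc sum_idx)

lemmas pois_rules = pois_divc_l pois_divc_r pois_add_l pois_diff_l pois_mult_l pois_const_l pois_lv_l
  pois_add_r pois_diff_r pois_mult_r pois_const_r pois_lv_r pois_qq pois_pp pois_qp pois_pq

definition PB :: "idx \<Rightarrow> idx \<Rightarrow> phase \<Rightarrow> real" where
  "PB a b z = (case (a,b) of
     (Xi,Yj) \<Rightarrow> - P Zk z | (Yj,Xi) \<Rightarrow> P Zk z
   | (Xi,Yk) \<Rightarrow> P Zj z | (Yk,Xi) \<Rightarrow> - P Zj z
   | (Xj,Yi) \<Rightarrow> P Zk z | (Yi,Xj) \<Rightarrow> - P Zk z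
   | (Xj,Yk) \<Rightarrow> - P Zi z | (Yk,Xj) \<Rightarrow> P Zi z
   | _ \<Rightarrow> 0)"

lemma pois_P: "poisson (P a) (P b) z = PB a b z"
  by (cases a; cases b) (simp_all add: P_expl PB_def pois_rules)

lemma R1_fun: "R1 = (\<lambda>z. pc Yi z + 1/2 * qc Xj z * pc Zk z)" by (rule ext) (simp add: R1_def)
lemma R2_fun: "R2 = (\<lambda>z. pc Yj z - 1/2 * qc Xi z * pc Zk z)" by (rule ext) (simp add: R2_def)

lemma pois_R1_P: "poisson R1 (P b) z = 0"
  by (cases b) (simp_all add: P_expl R1_fun pois_rules)
lemma pois_R2_P: "poisson R2 (P b) z = 0"
  by (cases b) (simp_all add: P_expl R2_fun pois_rules)
lemma pois_R12: "poisson R1 R2 z = 0"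
  by (simp add: R1_fun R2_fun pois_rules)


definition Th :: "(real \<times> nat \<times> nat \<times> bool) list" where "Th = [(1,0,0,True)]"

definition fS :: "phase \<Rightarrow> real" where
  "fS = (\<lambda>z. P Yi z * P Zi z + P Yj z * P Zj z + P Yk z * P Zk z)"
definition fK :: "phase \<Rightarrow> real" where
  "fK = (\<lambda>z. (P Zk z * P Yj z - P Zj z * P Yk z) * (P Zk z * P Yj z - P Zj z * P Yk z)
          + (P Zi z * P Yk z - P Zk z * P Yi z) * (P Zi z * P Yk z - P Zk z * P Yi z)
          + (P Zk z * P Xj z) * (P Zk z * P Xj z) + (P Zk z * P Xi z) * (P Zk z * P Xi z)
          + (P Zi z * P Xj z - P Zj z * P Xi z) * (P Zi z * P Xj z - P Zj z * P Xi z))"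
definition fT1 :: "phase \<Rightarrow> real" where "fT1 = (\<lambda>z. lv Th (P Zk z, R1 z))"
definition fT2 :: "phase \<Rightarrow> real" where "fT2 = (\<lambda>z. lv Th (P Zk z, R2 z))"

lemma pois_P_R1: "poisson (P b) R1 z = 0" by (subst pois_anti) (simp add: pois_R1_P)
lemma pois_P_R2: "poisson (P b) R2 z = 0" by (subst pois_anti) (simp add: pois_R2_P)
lemma pois_R21: "poisson R2 R1 z = 0" by (subst pois_anti) (simp add: pois_R12)
lemma pois_self: "poisson f f z = 0" by (simp add: poisson_def algebra_simps)

lemmas base_pois = pois_P pois_R1_P pois_R2_P pois_R12 pois_P_R1 pois_P_R2 pois_R21 pois_self

lemma "poisson fK Ham z = 0"
  unfolding fK_def Ham_P
  by (simp add: pois_rules base_pois PB_def) algebra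

lemma "poisson fS Ham z = 0"
  unfolding fS_def Ham_P
  by (simp add: pois_rules base_pois PB_def) algebra

lemma "poisson fT1 fK z = 0"
  unfolding fT1_def fK_def
  by (simp add: pois_rules base_pois PB_def)

definition fam :: "(phase \<Rightarrow> real) list" where
  "fam = [P Zi, P Zj, P Zk, fS, Ham, fK, fT1, fT2]"

lemma card_idx: "CARD(idx) = 8" by (simp add: UNIV_idx)

lemma lt8: "(i::nat) < 8 \<Longrightarrow> i = 0 \<or> i = 1 \<or> i = 2 \<or> i = 3 \<or> i = 4 \<or> i = 5 \<or> i = 6 \<or> i = 7"
  by auto

lemma fam_pois: "i < 8 \<Longrightarrow> j < 8 \<Longrightarrow> poisson (fam ! i) (fam ! j) z = 0"
  apply (drule lt8)+
  apply (elim disjE; hypsubst_thin)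
  apply (simp_all add: fam_def fS_def fK_def fT1_def fT2_def Ham_P pois_rules base_pois PB_def)
  apply algebra+
  done

lemma nmult_comp: "nmult g q $ k = g$k + q$k + 1/2 * br g q $ k" by (simp add: nmult_def)
lemma pull_comp: "pull g p $ k = P k (g, p)" by (simp add: pull_def P_def)

lemma P_inv: "P a (nmult g q, p) = P a (q, pull g p)"
  apply (cases a)
  apply (simp_all add: P_expl qc_def pc_def nmult_comp pull_comp br_comp algebra_simps)
  apply (simp_all add: field_simps)
  done

lemma R1_inv: "R1 (nmult g q, p) = R1 (q, pull g p) + g$Xj * P Zk (q, pull g p)"
  by (simp add: R1_def P_expl qc_def pc_def nmult_comp pull_comp br_comp algebra_simps)
lemma R2_inv: "R2 (nmult g q, p) = R2 (q, pull g p) - g$Xi * P Zk (q, pull g p)"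
  by (simp add: R2_def P_expl qc_def pc_def nmult_comp pull_comp br_comp algebra_simps)

lemma lv_Th_per: assumes "k \<in> \<int>" shows "lv Th (t, r + k * t) = lv Th (t, r)"
proof (cases "t = 0")
  case True then show ?thesis by (simp add: Th_def atom_def)
next
  case False
  have "2 * pi * (r + k * t) / t = 2 * pi * r / t + 2 * pi * k" using False by (simp add: field_simps)
  moreover have "cos (2 * pi * r / t + 2 * pi * k) = cos (2 * pi * r / t)"
    using cos_integer_2pi[OF assms] sin_integer_2pi[OF assms] by (simp add: cos_add)
  ultimately show ?thesis using False by (simp add: Th_def atom_def)
qed

lemma ginv_P: assumes "\<And>z z'. (\<And>a. P a z = P a z') \<Longrightarrow> f z = f z'"
  shows "gamma_invariant f"
  unfolding gamma_invariant_def using assms P_inv by blast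

lemma Gamma_int: "g \<in> Gamma \<Longrightarrow> g $ Xi \<in> \<int> \<and> g $ Xj \<in> \<int>"
  by (simp add: Gamma_def)

lemma ginv_T1: "gamma_invariant fT1"
  unfolding gamma_invariant_def fT1_def
proof (intro ballI allI)
  fix g q p assume g: "g \<in> Gamma"
  show "lv Th (P Zk (nmult g q, p), R1 (nmult g q, p)) = lv Th (P Zk (q, pull g p), R1 (q, pull g p))"
    unfolding P_inv R1_inv using lv_Th_per Gamma_int[OF g] by auto
qed

lemma ginv_T2: "gamma_invariant fT2"
  unfolding gamma_invariant_def fT2_def
proof (intro ballI allI)
  fix g q p assume g: "g \<in> Gamma"
  have "- g $ Xi \<in> \<int>" using Gamma_int[OF g] by simp
  from lv_Th_per[OF this, of "P Zk (q, pull g p)" "R2 (q, pull g p)"]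
  have "lv Th (P Zk (q, pull g p), R2 (q, pull g p) - g $ Xi * P Zk (q, pull g p)) = lv Th (P Zk (q, pull g p), R2 (q, pull g p))"
    by (simp add: algebra_simps)
  then show "lv Th (P Zk (nmult g q, p), R2 (nmult g q, p)) = lv Th (P Zk (q, pull g p), R2 (q, pull g p))"
    unfolding P_inv R2_inv .
qed

lemma fam_ginv: "i < 8 \<Longrightarrow> gamma_invariant (fam ! i)"
  apply (drule lt8)
  apply (elim disjE; hypsubst_thin)
  apply (simp_all add: fam_def ginv_T1 ginv_T2)
  apply (rule ginv_P, simp add: fS_def Ham_P fK_def)+
  done

lemma fam_smooth: "i < 8 \<Longrightarrow> smooth_fn (fam ! i)"
  apply (drule lt8)
  apply (elim disjE; hypsubst_thin)
  apply (simp_all add: fam_def fS_def Ham_P fK_def fT1_def fT2_def)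
  done


definition Uset :: "phase set" where
  "Uset = {z. P Zk z \<noteq> 0 \<and> P Zi z * P Xj z - P Zj z * P Xi z \<noteq> 0 \<and>
     P Zi z * P Xi z + P Zj z * P Xj z \<noteq> 0 \<and>
     lv (drl Th) (P Zk z, R1 z) \<noteq> 0 \<and> lv (drl Th) (P Zk z, R2 z) \<noteq> 0}"

lemma sum8: "(\<Sum>i<8. f i) = f 0 + f 1 + f 2 + f 3 + f 4 + f 5 + f 6 + f (7::nat)"
  by (simp add: numeral_eq_Suc)

lemmas dp_simps = sum8 fam_def fS_def Ham_P fK_def fT1_def fT2_def d_rules P_expl R1_fun R2_fun

lemma indep_core:
  assumes e: "\<And>k. (\<Sum>i<8. c i * dp (fam ! i) k z) = 0" and z: "z \<in> Uset"
  shows "\<forall>i<8. c i = 0"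
proof -
  define A where "A = P Zi z * P Xj z - P Zj z * P Xi z"
  define B where "B = P Zi z * P Xi z + P Zj z * P Xj z"
  have A: "A \<noteq> 0" and B: "B \<noteq> 0" and c3: "P Zk z \<noteq> 0"
   and T1: "lv (drl Th) (P Zk z, R1 z) \<noteq> 0" and T2: "lv (drl Th) (P Zk z, R2 z) \<noteq> 0"
    using z by (auto simp: Uset_def A_def B_def)
  have EXi: "c 4 * P Xi z + c 5 * (2*(P Zk z*P Zk z)*P Xi z - 2*P Zj z*A) = 0"
    using e[of Xi] unfolding A_def by (simp add: dp_simps) algebra
  have EXj: "c 4 * P Xj z + c 5 * (2*(P Zk z*P Zk z)*P Xj z + 2*P Zi z*A) = 0"
    using e[of Xj] unfolding A_def by (simp add: dp_simps) algebra
  have "c 5 * A * B = 0"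
  proof -
    have "P Xj z * (c 4 * P Xi z + c 5 * (2*(P Zk z*P Zk z)*P Xi z - 2*P Zj z*A))
        - P Xi z * (c 4 * P Xj z + c 5 * (2*(P Zk z*P Zk z)*P Xj z + 2*P Zi z*A)) = 0"
      using EXi EXj by simp
    then show ?thesis unfolding B_def by algebra
  qed
  then have h5: "c 5 = 0" using A B by simp
  have "c 4 * P Xi z = 0" "c 4 * P Xj z = 0" using EXi EXj h5 by simp_all
  then have h4: "c 4 = 0" using B unfolding B_def by auto
  have "c 3 * P Zk z = 0" using e[of Yk] h4 h5 by (simp add: dp_simps)
  then have h3: "c 3 = 0" using c3 by simp
  have "c 6 * lv (drl Th) (P Zk z, R1 z) = 0" using e[of Yi] h3 h4 h5 by (simp add: dp_simps)
  then have h6: "c 6 = 0" using T1 by simp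
  have "c 7 * lv (drl Th) (P Zk z, R2 z) = 0" using e[of Yj] h3 h4 h5 by (simp add: dp_simps)
  then have h7: "c 7 = 0" using T2 by simp
  have h0: "c 0 = 0" using e[of Zi] h3 h4 h5 h6 h7 by (simp add: dp_simps)
  have h1: "c 1 = 0" using e[of Zj] h3 h4 h5 h6 h7 by (simp add: dp_simps)
  have h2: "c 2 = 0" using e[of Zk] h3 h4 h5 h6 h7 by (simp add: dp_simps)
  show ?thesis
  proof (intro allI impI)
    fix i :: nat assume "i < 8"
    then show "c i = 0" using lt8 h0 h1 h2 h3 h4 h5 h6 h7 by blast
  qed
qed

lemma indep: assumes z: "z \<in> Uset" shows "indep_diffs 8 (\<lambda>i. fam ! i) z"
  unfolding indep_diffs_def
proof (rule allI, rule impI)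
  fix c :: "nat \<Rightarrow> real"
  assume h: "\<forall>v. (\<Sum>i<8. c i * frechet_derivative (fam ! i) (at z) v) = 0"
  have "\<And>k. (\<Sum>i<8. c i * dp (fam ! i) k z) = 0"
    using h unfolding dp_def by blast
  then show "\<forall>i<8. c i = 0" using indep_core z by blast
qed

lemma lv_drl_Th: "lv (drl Th) (t,r) = (if t = 0 then 0 else - 2 * pi * exp (- 1 / t^2) * (1/t) * sin (2 * pi * r / t))"
  by (simp add: Th_def atom_def)

lemma avoid_sin:
  assumes t: "t \<noteq> 0" and eta: "\<eta> > 0"
  shows "\<exists>w. \<bar>w\<bar> < \<eta> \<and> sin (2 * pi * (r + w) / t) \<noteq> 0"
proof (cases "sin (2 * pi * r / t) = 0")
  case False
  then show ?thesis using eta by (intro exI[of _ 0]) auto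
next
  case True
  define w where "w = min (\<eta>/2) (\<bar>t\<bar>/4)"
  have w0: "w > 0" using eta t by (simp add: w_def)
  have w1: "w < \<eta>" using eta by (simp add: w_def)
  have w2: "w \<le> \<bar>t\<bar>/4" by (simp add: w_def)
  define x where "x = 2 * pi * r / t"
  define y where "y = 2 * pi * w / t"
  have xy: "2 * pi * (r + w) / t = x + y" by (simp add: x_def y_def add_divide_distrib distrib_left)
  have cx: "cos x \<noteq> 0" using True sin_cos_squared_add[of x] unfolding x_def by auto
  have ay: "\<bar>y\<bar> = 2 * pi * w / \<bar>t\<bar>" using w0 by (simp add: y_def abs_mult)
  have y0: "\<bar>y\<bar> > 0" using ay w0 t by simp
  have yp: "\<bar>y\<bar> < pi"
  proof -
    have "2 * pi * w / \<bar>t\<bar> \<le> 2 * pi * (\<bar>t\<bar>/4) / \<bar>t\<bar>"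
      using w2 t by (intro divide_right_mono mult_left_mono) auto
    also have "\<dots> = pi / 2" using t by simp
    finally show ?thesis using ay pi_gt_zero by linarith
  qed
  have sy: "sin y \<noteq> 0"
  proof
    assume "sin y = 0"
    then obtain i :: int where i: "y = of_int i * pi" using sin_zero_iff_int2 by blast
    then have "\<bar>y\<bar> = \<bar>of_int i\<bar> * pi" by (simp add: abs_mult)
    moreover have "i \<noteq> 0" using i y0 by auto
    then have "\<bar>of_int i :: real\<bar> \<ge> 1" by linarith
    ultimately have "\<bar>y\<bar> \<ge> pi" using pi_gt_zero by (metis mult_le_cancel_right1 order.strict_iff_not)
    with yp show False by simp
  qed
  have "sin (x + y) = cos x * sin y" using True by (simp add: sin_add x_def)
  then have "sin (x + y) \<noteq> 0" using cx sy by simp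
  then show ?thesis using w1 w0 xy by (intro exI[of _ w]) auto
qed

lemma avoid2:
  assumes "\<beta> \<noteq> 0" "\<gamma> \<noteq> 0" "\<eta> > 0"
  shows "\<exists>v. \<bar>v\<bar> < \<eta> \<and> \<alpha> + \<beta> * v \<noteq> 0 \<and> \<gamma> + \<delta> * v \<noteq> (0::real)"
proof (cases "\<alpha> = 0")
  case False
  then show ?thesis using assms by (intro exI[of _ 0]) auto
next
  case True
  show ?thesis
  proof (cases "\<gamma> + \<delta> * (\<eta>/3) = 0")
    case False
    then show ?thesis using assms True by (intro exI[of _ "\<eta>/3"]) auto
  next
    case g: True
    have "\<gamma> + \<delta> * (2*\<eta>/3) = - \<gamma>" using g by (simp add: field_simps)
    then show ?thesis using assms True by (intro exI[of _ "2*\<eta>/3"]) auto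
  qed
qed

lemma open_nz: "smooth_fn f \<Longrightarrow> open {z. f z \<noteq> 0}"
  by (rule open_Collect_neq) (auto intro: smooth_cont)

lemma open_Uset: "open Uset"
proof -
  have "Uset = {z. P Zk z \<noteq> 0} \<inter> {z. P Zi z * P Xj z - P Zj z * P Xi z \<noteq> 0} \<inter>
     {z. P Zi z * P Xi z + P Zj z * P Xj z \<noteq> 0} \<inter>
     {z. lv (drl Th) (P Zk z, R1 z) \<noteq> 0} \<inter> {z. lv (drl Th) (P Zk z, R2 z) \<noteq> 0}"
    by (auto simp: Uset_def)
  moreover have "open \<dots>" by (intro open_Int open_nz) simp_all
  ultimately show ?thesis by simp
qed

lemma norm_e: "norm (e k) = 1" by (simp add: e_def)

lemma approx_Uset: assumes eps: "\<epsilon> > 0" shows "\<exists>y\<in>Uset. dist y z < \<epsilon>"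
proof -
  obtain q p where z: "z = (q,p)" by (cases z)
  define \<eta> where "\<eta> = \<epsilon>/8"
  have eta: "\<eta> > 0" using eps by (simp add: \<eta>_def)
  define c1 where "c1 = (if p$Zi = 0 then \<eta>/2 else p$Zi)"
  define c3 where "c3 = (if p$Zk = 0 then \<eta>/2 else p$Zk)"
  define c2 where "c2 = p$Zj"
  have c1nz: "c1 \<noteq> 0" and c3nz: "c3 \<noteq> 0" using eta by (auto simp: c1_def c3_def)
  have d1: "\<bar>c1 - p$Zi\<bar> < \<eta>" and d3: "\<bar>c3 - p$Zk\<bar> < \<eta>" using eta by (auto simp: c1_def c3_def)
  define P10 where "P10 = p$Xi - 1/2*q$Yj*c3 + 1/2*q$Yk*c2"
  define P20 where "P20 = p$Xj + 1/2*q$Yi*c3 - 1/2*q$Yk*c1"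
  define u where "u = (if c1*P10 + c2*P20 = 0 then \<eta>/2 else 0)"
  have gam: "c1*(P10+u) + c2*P20 \<noteq> 0"
  proof (cases "c1*P10 + c2*P20 = 0")
    case True
    then have "c1*(P10+u) + c2*P20 = c1 * (\<eta>/2)" by (simp add: u_def algebra_simps)
    moreover have "c1 * (\<eta>/2) \<noteq> 0" using c1nz eta by simp
    ultimately show ?thesis by metis
  next
    case False
    then show ?thesis by (simp add: u_def)
  qed
  have du: "\<bar>u\<bar> < \<eta>" using eta by (auto simp: u_def)
  obtain v where dv: "\<bar>v\<bar> < \<eta>" and v1: "(c1*P20 - c2*(P10+u)) + c1 * v \<noteq> 0"
      and v2: "(c1*(P10+u) + c2*P20) + c2 * v \<noteq> 0"
    using avoid2[OF c1nz gam eta] by blast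
  define R10 where "R10 = p$Yi + 1/2*q$Xj*c3"
  define R20 where "R20 = p$Yj - 1/2*q$Xi*c3"
  obtain w1 where dw1: "\<bar>w1\<bar> < \<eta>" and w1: "sin (2 * pi * (R10 + w1) / c3) \<noteq> 0"
    using avoid_sin[OF c3nz eta] by blast
  obtain w2 where dw2: "\<bar>w2\<bar> < \<eta>" and w2: "sin (2 * pi * (R20 + w2) / c3) \<noteq> 0"
    using avoid_sin[OF c3nz eta] by blast
  define dlt where "dlt = (c1 - p$Zi) *\<^sub>R e Zi + (c3 - p$Zk) *\<^sub>R e Zk + u *\<^sub>R e Xi + v *\<^sub>R e Xj
     + w1 *\<^sub>R e Yi + w2 *\<^sub>R e Yj"
  define p' where "p' = p + dlt"
  have cZi: "p'$Zi = c1" and cZj: "p'$Zj = c2" and cZk: "p'$Zk = c3"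
   and cXi: "p'$Xi = p$Xi + u" and cXj: "p'$Xj = p$Xj + v"
   and cYi: "p'$Yi = p$Yi + w1" and cYj: "p'$Yj = p$Yj + w2"
    by (simp_all add: p'_def dlt_def e_comp c2_def)
  define y where "y = (q, p')"
  have PZi: "P Zi y = c1" and PZj: "P Zj y = c2" and PZk: "P Zk y = c3"
    by (simp_all add: y_def P_expl pc_def cZi cZj cZk)
  have PXi: "P Xi y = P10 + u" by (simp add: y_def P_expl pc_def qc_def cXi cZj cZk P10_def)
  have PXj: "P Xj y = P20 + v" by (simp add: y_def P_expl pc_def qc_def cXj cZi cZk P20_def)
  have R1y: "R1 y = R10 + w1" by (simp add: y_def R1_def pc_def qc_def cYi cZk R10_def)
  have R2y: "R2 y = R20 + w2" by (simp add: y_def R2_def pc_def qc_def cYj cZk R20_def)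
  have "y \<in> Uset"
  proof -
    have "P Zi y * P Xj y - P Zj y * P Xi y = (c1*P20 - c2*(P10+u)) + c1 * v"
      by (simp add: PZi PZj PXi PXj algebra_simps)
    moreover have "P Zi y * P Xi y + P Zj y * P Xj y = (c1*(P10+u) + c2*P20) + c2 * v"
      by (simp add: PZi PZj PXi PXj algebra_simps)
    ultimately show ?thesis
      using v1 v2 c3nz w1 w2 by (simp add: Uset_def PZk R1y R2y lv_drl_Th)
  qed
  moreover have "dist y z < \<epsilon>"
  proof -
    have "dist y z = norm dlt" by (simp add: y_def z p'_def dist_Pair_Pair dist_norm)
    also have "\<dots> \<le> \<bar>c1 - p$Zi\<bar> + \<bar>c3 - p$Zk\<bar> + \<bar>u\<bar> + \<bar>v\<bar> + \<bar>w1\<bar> + \<bar>w2\<bar>"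
      unfolding dlt_def
      by (rule order.trans[OF norm_triangle_ineq] add_mono)+ (simp_all add: norm_e)
    also have "\<dots> < 6 * \<eta>" using d1 d3 du dv dw1 dw2 by linarith
    also have "\<dots> < \<epsilon>" using eps by (simp add: \<eta>_def)
    finally show ?thesis .
  qed
  ultimately show ?thesis by blast
qed

lemma dense_Uset: "closure Uset = UNIV"
  using approx_Uset by (auto simp: closure_approachable)


theorem corollary3p3:
  shows "geodesic_flow_completely_integrable"
proof -
  have H: "Ham = fam ! 4" by (simp add: fam_def)
  show ?thesis
    unfolding geodesic_flow_completely_integrable_def card_idx
  proof (intro exI[of _ "\<lambda>i. fam ! i"] conjI allI impI)
    fix i :: nat assume i: "i < 8"
    show "smooth_fn (fam ! i)" using fam_smooth[OF i] .
    show "gamma_invariant (fam ! i)" using fam_ginv[OF i] .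
    fix z show "poisson (fam ! i) Ham z = 0" unfolding H by (rule fam_pois[OF i]) simp
  next
    fix i j :: nat and z assume "i < 8" "j < 8"
    then show "poisson (fam ! i) (fam ! j) z = 0" by (rule fam_pois)
  next
    show "\<exists>U. open U \<and> closure U = UNIV \<and> (\<forall>z\<in>U. indep_diffs 8 (\<lambda>i. fam ! i) z)"
      using open_Uset dense_Uset indep by blast
  qed
qed

end
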